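(* Let $\mathcal X\subseteq\mathbb R^p$, let $\mathcal A=\{a^{(1)},\dots,a^{(d)}\}$ (historical action set) and $\bar{\mathcal A}=\{\bar a^{(1)},\dots,\bar a^{(m)}\}$ (new action set) be finite sets of real actions. Let $(\boldsymbol X_i,A_i,R_i)$, $i=1,\dots,n$, be random tuples with $\boldsymbol X_i\in\mathcal X$, $A_i\in\mathcal A$, $R_i\in\mathbb R$ such that: (i) the tuples are independent; (ii) $\boldsymbol X_1,\dots,\boldsymbol X_n$ are i.i.d., distributed as a generic $\boldsymbol X$; (iii) conditionally on $\boldsymbol X_i$, $A_i$ has distribution $\widetilde\pi_i(\cdot\mid\boldsymbol X_i)$ with $\widetilde\pi_i(a\mid\boldsymbol x)>0$ for all $a\in\mathcal A$, $\boldsymbol x\in\mathcal X$; (iv) the conditional distribution of the reward given features $\boldsymbol x$ and action $a$ does not depend on $i$. For $\boldsymbol x\in\mathcal X$ and $a\in\mathcal A\cup\bar{\mathcal A}$ let $\varrho(\boldsymbol x,a)$ denote the expected reward when action $a$ is taken for a policyholder with features $\boldsymbol x$ (so $\varrho(\boldsymbol x,a)=\mathbb E[R_i\mid\boldsymbol X_i=\boldsymbol x,A_i=a]$ for $a\in\mathcal A$). Let $f_1,\dots,f_q:\mathbb R\to\mathbb R$ and $\boldsymbol f(a)=(1,f_1(a),\dots,f_q(a))^\top$. Let $D\in\mathbb R^{d\times(q+1)}$ have $k$-th row $\boldsymbol f(a^{(k)})^\top$ and $\bar D\in\mathbb R^{m\times(q+1)}$ have $k$-th row $\boldsymbol f(\bar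 a^{(k)})^\top$, and assume $D$ has full column rank $q+1$. Assume the regression assumption: for every $\boldsymbol x\in\mathcal X$ there is $\boldsymbol\beta(\boldsymbol x)\in\mathbb R^{q+1}$ with $\varrho(\boldsymbol x,a)=\boldsymbol f(a)^\top\boldsymbol\beta(\boldsymbol x)$ for all $a\in\mathcal A\cup\bar{\mathcal A}$. For each $i$ let $W_i(\boldsymbol x)\in\mathbb R^{d\times d}$ be symmetric positive definite for every $\boldsymbol x$, and set $\mathbf K_i(\boldsymbol x)=W_i(\boldsymbol x)D\,(D^\top W_i(\boldsymbol x)D)^{-1}\bar D^\top\in\mathbb R^{d\times m}$. For a deterministic policy $\bar\pi:\mathcal X\to\bar{\mathcal A}$ define the kernelized IPS estimator $$\widehat V_{\rm K}(\bar\pi)=\frac1n\sum_{i=1}^n R_i\,\frac{\langle\boldsymbol e_{A_i},\mathbf K_i(\boldsymbol X_i)\,\bar{\boldsymbol e}_{\bar\pi(\boldsymbol X_i)}\rangle}{\widetilde\pi_i(A_i\mid\boldsymbol X_i)}.$$ Then $\widehat V_{\rm K}(\bar\pi)$ is unbiased for $V(\bar\pi)=\mathbb E[\varrho(\boldsymbol X,\bar\pi(\boldsymbol X))]$.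
   Context: $\boldsymbol e_a\in\{0,1\}^d$ denotes the one-hot encoding of $a\in\mathcal A$ (entry $k$ equals $\mathbf 1_{\{a=a^{(k)}\}}$), and $\bar{\boldsymbol e}_{\bar a}\in\{0,1\}^m$ the one-hot encoding of $\bar a\in\bar{\mathcal A}$. $V(\bar\pi)$ is the value of $\bar\pi$, i.e. the expected reward when actions are chosen by $\bar\pi$. All expectations appearing are assumed finite. *)

theory Defs
  imports "HOL-Analysis.Analysis" "HOL-Probability.Probability"
begin

definition onehot :: "('d::finite \<Rightarrow> real) \<Rightarrow> real \<Rightarrow> real^'d" where
  "onehot act a = (\<chi> k. if a = act k then 1 else 0)"

definition design :: "(real \<Rightarrow> real^'k) \<Rightarrow> ('d::finite \<Rightarrow> real) \<Rightarrow> real^'k^'d" where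
  "design f act = (\<chi> k. f (act k))"

definition sym_posdef :: "real^'d^'d \<Rightarrow> bool" where
  "sym_posdef W \<longleftrightarrow> transpose W = W \<and> (\<forall>v. v \<noteq> 0 \<longrightarrow> v \<bullet> (W *v v) > 0)"

definition Kmat :: "real^'d^'d \<Rightarrow> real^'k^'d \<Rightarrow> real^'k^'m \<Rightarrow> real^'m^'d" where
  "Kmat W D Dbar = W ** D ** matrix_inv (transpose D ** W ** D) ** transpose Dbar"

definition rho :: "('x \<Rightarrow> real \<Rightarrow> real measure) \<Rightarrow> 'x \<Rightarrow> real \<Rightarrow> real" where
  "rho \<kappa> x a = (\<integral>r. r \<partial>(\<kappa> x a))"

end

theory Submission
  imports Defs
begin


lemma disint_nn:
  fixes M :: "'w measure" and S :: "'y measure" and Y :: "'w \<Rightarrow> 'y" and Rv :: "'w \<Rightarrow> real"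
    and K :: "'w \<Rightarrow> real measure" and \<phi> :: "'y \<times> real \<Rightarrow> ennreal"
  assumes M: "prob_space M"
    and Y[measurable]: "Y \<in> M \<rightarrow>\<^sub>M S" and Rv[measurable]: "Rv \<in> borel_measurable M"
    and K[measurable]: "K \<in> M \<rightarrow>\<^sub>M subprob_algebra borel"
    and rect: "\<And>B C. B \<in> sets S \<Longrightarrow> C \<in> sets borel \<Longrightarrow>
       emeasure M {\<omega>\<in>space M. Y \<omega> \<in> B \<and> Rv \<omega> \<in> C} = (\<integral>\<^sup>+\<omega>. indicator B (Y \<omega>) * emeasure (K \<omega>) C \<partial>M)"
    and phi[measurable]: "\<phi> \<in> borel_measurable (S \<Otimes>\<^sub>M borel)"
  shows "(\<integral>\<^sup>+\<omega>. \<phi> (Y \<omega>, Rv \<omega>) \<partial>M) = (\<integral>\<^sup>+\<omega>. \<integral>\<^sup>+r. \<phi> (Y \<omega>, r) \<partial>K \<omega> \<partial>M)"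
proof -
  interpret prob_space M by (rule M)
  define L where "L = (\<lambda>\<omega>. distr (K \<omega>) (S \<Otimes>\<^sub>M borel) (\<lambda>r. (Y \<omega>, r)))"
  have L[measurable]: "L \<in> M \<rightarrow>\<^sub>M subprob_algebra (S \<Otimes>\<^sub>M borel)"
    unfolding L_def by (rule measurable_distr2[where f="\<lambda>\<omega> r. (Y \<omega>, r)"]) measurable
  define N where "N = distr M (S \<Otimes>\<^sub>M borel) (\<lambda>\<omega>. (Y \<omega>, Rv \<omega>))"
  have NQ: "N = M \<bind> L"
  proof (rule measure_eqI_generator_eq[OF Int_stable_pair_measure_generator[of S "borel::real measure"],
        where \<Omega>="space S \<times> space borel" and A="\<lambda>_. space S \<times> space borel"])
    show "{a \<times> b |a b. a \<in> sets S \<and> b \<in> sets borel} \<subseteq> Pow (space S \<times> space borel)"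
      using sets.sets_into_space by fastforce
    show "sets N = sigma_sets (space S \<times> space borel) {a \<times> b |a b. a \<in> sets S \<and> b \<in> sets borel}"
      unfolding N_def by (simp add: sets_pair_measure)
    have "sets (M \<bind> L) = sets (S \<Otimes>\<^sub>M borel)"
      by (rule sets_bind[OF sets_kernel[OF L] not_empty])
    then show "sets (M \<bind> L) = sigma_sets (space S \<times> space borel) {a \<times> b |a b. a \<in> sets S \<and> b \<in> sets borel}"
      by (simp add: sets_pair_measure)
    show "range (\<lambda>_. space S \<times> space borel) \<subseteq> {a \<times> b |a b. a \<in> sets S \<and> b \<in> sets borel}"
      by blast
    show "(\<Union>i. space S \<times> space borel) = space S \<times> space borel" by simp
    show "emeasure N (space S \<times> space borel) \<noteq> \<infinity>" for i :: nat
      unfolding N_def by (simp add: emeasure_distr)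
  next
    fix X :: "('y \<times> real) set" assume "X \<in> {a \<times> b |a b. a \<in> sets S \<and> b \<in> sets borel}"
    then obtain B C where X: "X = B \<times> C" and B[measurable]: "B \<in> sets S" and C[measurable]: "C \<in> sets borel" by blast
    have "emeasure N X = emeasure M {\<omega>\<in>space M. Y \<omega> \<in> B \<and> Rv \<omega> \<in> C}"
      unfolding N_def X by (subst emeasure_distr) (auto intro!: arg_cong[where f="emeasure M"])
    also have "\<dots> = (\<integral>\<^sup>+\<omega>. indicator B (Y \<omega>) * emeasure (K \<omega>) C \<partial>M)"
      by (rule rect) fact+
    also have "\<dots> = (\<integral>\<^sup>+\<omega>. emeasure (L \<omega>) X \<partial>M)"
    proof (rule nn_integral_cong)
      fix \<omega> assume w: "\<omega> \<in> space M"
      have sK: "sets (K \<omega>) = sets borel" using sets_kernel[OF K w] .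
      have m: "(\<lambda>r. (Y \<omega>, r)) \<in> K \<omega> \<rightarrow>\<^sub>M S \<Otimes>\<^sub>M borel"
        using w measurable_space[OF Y w] by (simp add: measurable_cong_sets[OF sK refl])
      have "emeasure (L \<omega>) X = emeasure (K \<omega>) ((\<lambda>r. (Y \<omega>, r)) -` X \<inter> space (K \<omega>))"
        unfolding L_def X by (rule emeasure_distr[OF m]) simp
      also have "(\<lambda>r. (Y \<omega>, r)) -` X \<inter> space (K \<omega>) = (if Y \<omega> \<in> B then C else {})"
        using sets_eq_imp_space_eq[OF sK] by (auto simp: X)
      finally show "indicator B (Y \<omega>) * emeasure (K \<omega>) C = emeasure (L \<omega>) X"
        by (simp add: indicator_def)
    qed
    also have "\<dots> = emeasure (M \<bind> L) X"
      using B C by (simp add: emeasure_bind[OF not_empty L] X)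
    finally show "emeasure N X = emeasure (M \<bind> L) X" .
  qed
  have "(\<integral>\<^sup>+\<omega>. \<phi> (Y \<omega>, Rv \<omega>) \<partial>M) = (\<integral>\<^sup>+z. \<phi> z \<partial>N)"
    unfolding N_def by (subst nn_integral_distr) auto
  also have "\<dots> = (\<integral>\<^sup>+\<omega>. \<integral>\<^sup>+z. \<phi> z \<partial>L \<omega> \<partial>M)"
    unfolding NQ by (rule nn_integral_bind[OF phi L])
  also have "\<dots> = (\<integral>\<^sup>+\<omega>. \<integral>\<^sup>+r. \<phi> (Y \<omega>, r) \<partial>K \<omega> \<partial>M)"
  proof (rule nn_integral_cong)
    fix \<omega> assume w: "\<omega> \<in> space M"
    have sK: "sets (K \<omega>) = sets borel" using sets_kernel[OF K w] .
    have m: "(\<lambda>r. (Y \<omega>, r)) \<in> K \<omega> \<rightarrow>\<^sub>M S \<Otimes>\<^sub>M borel"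
      using w measurable_space[OF Y w] by (simp add: measurable_cong_sets[OF sK refl])
    show "(\<integral>\<^sup>+z. \<phi> z \<partial>L \<omega>) = (\<integral>\<^sup>+r. \<phi> (Y \<omega>, r) \<partial>K \<omega>)"
      unfolding L_def using m by (subst nn_integral_distr) auto
  qed
  finally show ?thesis .
qed

lemma disint_part:
  fixes M :: "'w measure" and S :: "'y measure" and Y :: "'w \<Rightarrow> 'y" and Rv :: "'w \<Rightarrow> real"
    and K :: "'w \<Rightarrow> real measure" and p :: "real \<Rightarrow> real" and g :: "'y \<Rightarrow> real"
  assumes M: "prob_space M"
    and Y[measurable]: "Y \<in> M \<rightarrow>\<^sub>M S" and Rv[measurable]: "Rv \<in> borel_measurable M"
    and K[measurable]: "K \<in> M \<rightarrow>\<^sub>M subprob_algebra borel"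
    and rect: "\<And>B C. B \<in> sets S \<Longrightarrow> C \<in> sets borel \<Longrightarrow>
       emeasure M {\<omega>\<in>space M. Y \<omega> \<in> B \<and> Rv \<omega> \<in> C} = (\<integral>\<^sup>+\<omega>. indicator B (Y \<omega>) * emeasure (K \<omega>) C \<partial>M)"
    and p[measurable]: "p \<in> borel_measurable borel" and pnn: "\<And>r. p r \<ge> 0"
    and Kint: "\<And>\<omega>. \<omega> \<in> space M \<Longrightarrow> integrable (K \<omega>) p"
    and g[measurable]: "g \<in> borel_measurable S"
    and int: "integrable M (\<lambda>\<omega>. p (Rv \<omega>) * g (Y \<omega>))"
  shows "integrable M (\<lambda>\<omega>. (\<integral>r. p r \<partial>K \<omega>) * g (Y \<omega>))"
    and "(\<integral>\<omega>. p (Rv \<omega>) * g (Y \<omega>) \<partial>M) = (\<integral>\<omega>. (\<integral>r. p r \<partial>K \<omega>) * g (Y \<omega>) \<partial>M)"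
proof -
  interpret prob_space M by (rule M)
  have I[measurable]: "(\<lambda>\<omega>. \<integral>r. p r \<partial>K \<omega>) \<in> borel_measurable M"
    by (rule measurable_compose[OF K integral_measurable_subprob_algebra]) (rule p)
  have Inn: "(\<integral>r. p r \<partial>K \<omega>) \<ge> 0" for \<omega> using pnn by (simp add: integral_nonneg)
  define \<nu>1 where "\<nu>1 = distr (density M (\<lambda>\<omega>. ennreal (p (Rv \<omega>)))) S Y"
  define \<nu>2 where "\<nu>2 = distr (density M (\<lambda>\<omega>. ennreal (\<integral>r. p r \<partial>K \<omega>))) S Y"
  have eq: "\<nu>1 = \<nu>2"
  proof (rule measure_eqI)
    show "sets \<nu>1 = sets \<nu>2" unfolding \<nu>1_def \<nu>2_def by simp
    fix B assume "B \<in> sets \<nu>1"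
    then have B[measurable]: "B \<in> sets S" unfolding \<nu>1_def by simp
    have "emeasure \<nu>1 B = (\<integral>\<^sup>+\<omega>. ennreal (p (Rv \<omega>)) * indicator B (Y \<omega>) \<partial>M)"
      unfolding \<nu>1_def
      by (subst emeasure_distr, simp, simp, subst emeasure_density, simp, simp)
         (auto intro!: nn_integral_cong simp: indicator_def)
    also have "\<dots> = (\<integral>\<^sup>+\<omega>. \<integral>\<^sup>+r. ennreal (p r) * indicator B (Y \<omega>) \<partial>K \<omega> \<partial>M)"
    proof -
      have phiB: "(\<lambda>z. ennreal (p (snd z)) * indicator B (fst z)) \<in> borel_measurable (S \<Otimes>\<^sub>M borel)"
        by measurable
      show ?thesis using disint_nn[OF M Y Rv K rect phiB] by (simp only: fst_conv snd_conv)
    qed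
    also have "\<dots> = (\<integral>\<^sup>+\<omega>. ennreal (\<integral>r. p r \<partial>K \<omega>) * indicator B (Y \<omega>) \<partial>M)"
    proof (rule nn_integral_cong)
      fix \<omega> assume w: "\<omega> \<in> space M"
      have sK: "sets (K \<omega>) = sets borel" using sets_kernel[OF K w] .
      have "(\<integral>\<^sup>+r. ennreal (p r) * indicator B (Y \<omega>) \<partial>K \<omega>) = (\<integral>\<^sup>+r. ennreal (p r) \<partial>K \<omega>) * indicator B (Y \<omega>)"
        by (rule nn_integral_multc) (simp add: measurable_cong_sets[OF sK refl])
      also have "(\<integral>\<^sup>+r. ennreal (p r) \<partial>K \<omega>) = ennreal (\<integral>r. p r \<partial>K \<omega>)"
        by (rule nn_integral_eq_integral[OF Kint[OF w]]) (simp add: pnn)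
      finally show "(\<integral>\<^sup>+r. ennreal (p r) * indicator B (Y \<omega>) \<partial>K \<omega>) = ennreal (\<integral>r. p r \<partial>K \<omega>) * indicator B (Y \<omega>)" .
    qed
    also have "\<dots> = emeasure \<nu>2 B"
      unfolding \<nu>2_def
      by (subst emeasure_distr, simp, simp, subst emeasure_density, simp, simp)
         (auto intro!: nn_integral_cong simp: indicator_def)
    finally show "emeasure \<nu>1 B = emeasure \<nu>2 B" .
  qed
  have int1: "integrable \<nu>1 g \<longleftrightarrow> integrable M (\<lambda>\<omega>. p (Rv \<omega>) * g (Y \<omega>))"
    unfolding \<nu>1_def by (subst integrable_distr_eq) (simp_all add: integrable_density pnn)
  have int2: "integrable \<nu>2 g \<longleftrightarrow> integrable M (\<lambda>\<omega>. (\<integral>r. p r \<partial>K \<omega>) * g (Y \<omega>))"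
    unfolding \<nu>2_def by (subst integrable_distr_eq) (simp_all add: integrable_density Inn)
  show "integrable M (\<lambda>\<omega>. (\<integral>r. p r \<partial>K \<omega>) * g (Y \<omega>))"
    using int int1 int2 eq by simp
  have i1: "integral\<^sup>L \<nu>1 g = (\<integral>\<omega>. p (Rv \<omega>) * g (Y \<omega>) \<partial>M)"
    unfolding \<nu>1_def by (subst integral_distr) (simp_all add: integral_density pnn)
  have i2: "integral\<^sup>L \<nu>2 g = (\<integral>\<omega>. (\<integral>r. p r \<partial>K \<omega>) * g (Y \<omega>) \<partial>M)"
    unfolding \<nu>2_def by (subst integral_distr) (simp_all add: integral_density Inn)
  show "(\<integral>\<omega>. p (Rv \<omega>) * g (Y \<omega>) \<partial>M) = (\<integral>\<omega>. (\<integral>r. p r \<partial>K \<omega>) * g (Y \<omega>) \<partial>M)"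
    using i1 i2 eq by simp
qed

lemma disint_int:
  fixes M :: "'w measure" and S :: "'y measure" and Y :: "'w \<Rightarrow> 'y" and Rv :: "'w \<Rightarrow> real"
    and K :: "'w \<Rightarrow> real measure" and g :: "'y \<Rightarrow> real"
  assumes M: "prob_space M"
    and Y[measurable]: "Y \<in> M \<rightarrow>\<^sub>M S" and Rv[measurable]: "Rv \<in> borel_measurable M"
    and K[measurable]: "K \<in> M \<rightarrow>\<^sub>M subprob_algebra borel"
    and rect: "\<And>B C. B \<in> sets S \<Longrightarrow> C \<in> sets borel \<Longrightarrow>
       emeasure M {\<omega>\<in>space M. Y \<omega> \<in> B \<and> Rv \<omega> \<in> C} = (\<integral>\<^sup>+\<omega>. indicator B (Y \<omega>) * emeasure (K \<omega>) C \<partial>M)"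
    and Kint: "\<And>\<omega>. \<omega> \<in> space M \<Longrightarrow> integrable (K \<omega>) (\<lambda>r. r)"
    and g[measurable]: "g \<in> borel_measurable S"
    and int: "integrable M (\<lambda>\<omega>. Rv \<omega> * g (Y \<omega>))"
  shows "integrable M (\<lambda>\<omega>. (\<integral>r. r \<partial>K \<omega>) * g (Y \<omega>))"
    and "(\<integral>\<omega>. Rv \<omega> * g (Y \<omega>) \<partial>M) = (\<integral>\<omega>. (\<integral>r. r \<partial>K \<omega>) * g (Y \<omega>) \<partial>M)"
proof -
  define p1 where "p1 = (\<lambda>r::real. max r 0)"
  define p2 where "p2 = (\<lambda>r::real. max (- r) 0)"
  have p1m[measurable]: "p1 \<in> borel_measurable borel" unfolding p1_def by measurable
  have p2m[measurable]: "p2 \<in> borel_measurable borel" unfolding p2_def by measurable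
  have Ki1: "integrable (K \<omega>) p1" if "\<omega> \<in> space M" for \<omega>
    unfolding p1_def using Kint[OF that] by (intro integrable_max) auto
  have Ki2: "integrable (K \<omega>) p2" if "\<omega> \<in> space M" for \<omega>
    unfolding p2_def using Kint[OF that] by (intro integrable_max) auto
  have int1: "integrable M (\<lambda>\<omega>. p1 (Rv \<omega>) * g (Y \<omega>))"
    by (rule Bochner_Integration.integrable_bound[OF int]) (auto simp: p1_def abs_mult intro!: mult_right_mono)
  have int2: "integrable M (\<lambda>\<omega>. p2 (Rv \<omega>) * g (Y \<omega>))"
    by (rule Bochner_Integration.integrable_bound[OF int]) (auto simp: p2_def abs_mult intro!: mult_right_mono)
  have nn1: "\<And>r. 0 \<le> p1 r" and nn2: "\<And>r. 0 \<le> p2 r" by (auto simp: p1_def p2_def)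
  note P1 = disint_part[OF M Y Rv K rect p1m nn1 Ki1 g int1]
  note P2 = disint_part[OF M Y Rv K rect p2m nn2 Ki2 g int2]
  have A1: "integrable M (\<lambda>\<omega>. (\<integral>r. p1 r \<partial>K \<omega>) * g (Y \<omega>))" using P1(1) .
  have A2: "integrable M (\<lambda>\<omega>. (\<integral>r. p2 r \<partial>K \<omega>) * g (Y \<omega>))" using P2(1) .
  have split: "(\<integral>r. r \<partial>K \<omega>) = (\<integral>r. p1 r \<partial>K \<omega>) - (\<integral>r. p2 r \<partial>K \<omega>)" if "\<omega> \<in> space M" for \<omega>
  proof -
    have "(\<integral>r. p1 r \<partial>K \<omega>) - (\<integral>r. p2 r \<partial>K \<omega>) = (\<integral>r. p1 r - p2 r \<partial>K \<omega>)"
      by (rule Bochner_Integration.integral_diff[symmetric]) (use Ki1 Ki2 that in auto)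
    also have "\<dots> = (\<integral>r. r \<partial>K \<omega>)"
      by (rule Bochner_Integration.integral_cong) (auto simp: p1_def p2_def max_def)
    finally show ?thesis by simp
  qed
  have eqf: "(\<lambda>\<omega>. (\<integral>r. r \<partial>K \<omega>) * g (Y \<omega>)) \<in> space M \<rightarrow> UNIV" by simp
  have "integrable M (\<lambda>\<omega>. (\<integral>r. p1 r \<partial>K \<omega>) * g (Y \<omega>) - (\<integral>r. p2 r \<partial>K \<omega>) * g (Y \<omega>))"
    using A1 A2 by (rule Bochner_Integration.integrable_diff)
  then show I: "integrable M (\<lambda>\<omega>. (\<integral>r. r \<partial>K \<omega>) * g (Y \<omega>))"
    by (rule Bochner_Integration.integrable_cong[THEN iffD1, OF refl, rotated]) (simp add: split left_diff_distrib)
  have "(\<integral>\<omega>. Rv \<omega> * g (Y \<omega>) \<partial>M) = (\<integral>\<omega>. p1 (Rv \<omega>) * g (Y \<omega>) - p2 (Rv \<omega>) * g (Y \<omega>) \<partial>M)"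
    by (rule Bochner_Integration.integral_cong) (auto simp: p1_def p2_def max_def algebra_simps)
  also have "\<dots> = (\<integral>\<omega>. p1 (Rv \<omega>) * g (Y \<omega>) \<partial>M) - (\<integral>\<omega>. p2 (Rv \<omega>) * g (Y \<omega>) \<partial>M)"
    by (rule Bochner_Integration.integral_diff[OF int1 int2])
  also have "\<dots> = (\<integral>\<omega>. (\<integral>r. p1 r \<partial>K \<omega>) * g (Y \<omega>) \<partial>M) - (\<integral>\<omega>. (\<integral>r. p2 r \<partial>K \<omega>) * g (Y \<omega>) \<partial>M)"
    by (simp only: P1(2) P2(2))
  also have "\<dots> = (\<integral>\<omega>. (\<integral>r. p1 r \<partial>K \<omega>) * g (Y \<omega>) - (\<integral>r. p2 r \<partial>K \<omega>) * g (Y \<omega>) \<partial>M)"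
    by (rule Bochner_Integration.integral_diff[OF A1 A2, symmetric])
  also have "\<dots> = (\<integral>\<omega>. (\<integral>r. r \<partial>K \<omega>) * g (Y \<omega>) \<partial>M)"
    by (rule Bochner_Integration.integral_cong) (auto simp: split left_diff_distrib)
  finally show "(\<integral>\<omega>. Rv \<omega> * g (Y \<omega>) \<partial>M) = (\<integral>\<omega>. (\<integral>r. r \<partial>K \<omega>) * g (Y \<omega>) \<partial>M)" .
qed

lemma cond_action:
  fixes M :: "'w measure" and S :: "'x measure" and X :: "'w \<Rightarrow> 'x" and A :: "'w \<Rightarrow> real"
    and a :: real and q :: "'x \<Rightarrow> real" and h :: "'x \<Rightarrow> real"
  assumes M: "prob_space M"
    and X[measurable]: "X \<in> M \<rightarrow>\<^sub>M S" and A[measurable]: "A \<in> borel_measurable M"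
    and q[measurable]: "q \<in> borel_measurable S" and qnn: "\<And>x. x \<in> space S \<Longrightarrow> q x \<ge> 0"
    and hyp: "\<And>B. B \<in> sets S \<Longrightarrow> emeasure M {\<omega>\<in>space M. X \<omega> \<in> B \<and> A \<omega> = a}
         = (\<integral>\<^sup>+\<omega>. ennreal (q (X \<omega>)) * indicator B (X \<omega>) \<partial>M)"
    and h[measurable]: "h \<in> borel_measurable S"
    and int: "integrable M (\<lambda>\<omega>. indicator {\<omega>. A \<omega> = a} \<omega> * h (X \<omega>))"
  shows "integrable M (\<lambda>\<omega>. q (X \<omega>) * h (X \<omega>))"
    and "(\<integral>\<omega>. indicator {\<omega>. A \<omega> = a} \<omega> * h (X \<omega>) \<partial>M) = (\<integral>\<omega>. q (X \<omega>) * h (X \<omega>) \<partial>M)"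
proof -
  interpret prob_space M by (rule M)
  have qX: "AE \<omega> in M. 0 \<le> q (X \<omega>)" using qnn measurable_space[OF X] by auto
  have ind[measurable]: "(\<lambda>\<omega>. indicator {\<omega>. A \<omega> = a} \<omega> :: real) \<in> borel_measurable M"
  proof -
    have "{\<omega>\<in>space M. A \<omega> = a} \<in> sets M" by measurable
    then have "(\<lambda>\<omega>. indicator {\<omega>\<in>space M. A \<omega> = a} \<omega> :: real) \<in> borel_measurable M" by simp
    then show ?thesis by (rule measurable_cong[THEN iffD1, rotated]) (simp add: indicator_def)
  qed
  define \<nu>1 where "\<nu>1 = distr (density M (\<lambda>\<omega>. ennreal (indicator {\<omega>. A \<omega> = a} \<omega>))) S X"
  define \<nu>2 where "\<nu>2 = distr (density M (\<lambda>\<omega>. ennreal (q (X \<omega>)))) S X"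
  have eq: "\<nu>1 = \<nu>2"
  proof (rule measure_eqI)
    show "sets \<nu>1 = sets \<nu>2" unfolding \<nu>1_def \<nu>2_def by simp
    fix B assume "B \<in> sets \<nu>1"
    then have B[measurable]: "B \<in> sets S" unfolding \<nu>1_def by simp
    have XB: "X -` B \<inter> space M \<in> sets M" by measurable
    have "emeasure \<nu>1 B = (\<integral>\<^sup>+\<omega>. ennreal (indicator {\<omega>. A \<omega> = a} \<omega>) * indicator (X -` B \<inter> space M) \<omega> \<partial>M)"
      unfolding \<nu>1_def by (simp add: emeasure_distr emeasure_density XB)
    also have "\<dots> = (\<integral>\<^sup>+\<omega>. indicator {\<omega>\<in>space M. X \<omega> \<in> B \<and> A \<omega> = a} \<omega> \<partial>M)"
      by (rule nn_integral_cong) (auto simp: indicator_def)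
    also have "\<dots> = emeasure M {\<omega>\<in>space M. X \<omega> \<in> B \<and> A \<omega> = a}"
      by (rule nn_integral_indicator) measurable
    also have "\<dots> = (\<integral>\<^sup>+\<omega>. ennreal (q (X \<omega>)) * indicator B (X \<omega>) \<partial>M)"
      by (rule hyp) fact
    also have "\<dots> = (\<integral>\<^sup>+\<omega>. ennreal (q (X \<omega>)) * indicator (X -` B \<inter> space M) \<omega> \<partial>M)"
      by (rule nn_integral_cong) (auto simp: indicator_def)
    also have "\<dots> = emeasure \<nu>2 B"
      unfolding \<nu>2_def by (simp add: emeasure_distr emeasure_density XB)
    finally show "emeasure \<nu>1 B = emeasure \<nu>2 B" .
  qed
  have int1: "integrable \<nu>1 h \<longleftrightarrow> integrable M (\<lambda>\<omega>. indicator {\<omega>. A \<omega> = a} \<omega> * h (X \<omega>))"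
    unfolding \<nu>1_def by (subst integrable_distr_eq) (simp_all add: integrable_density)
  have int2: "integrable \<nu>2 h \<longleftrightarrow> integrable M (\<lambda>\<omega>. q (X \<omega>) * h (X \<omega>))"
    unfolding \<nu>2_def by (subst integrable_distr_eq) (simp_all add: integrable_density qX)
  show "integrable M (\<lambda>\<omega>. q (X \<omega>) * h (X \<omega>))"
    using int int1 int2 eq by simp
  have i1: "integral\<^sup>L \<nu>1 h = (\<integral>\<omega>. indicator {\<omega>. A \<omega> = a} \<omega> * h (X \<omega>) \<partial>M)"
    unfolding \<nu>1_def by (subst integral_distr) (simp_all add: integral_density)
  have i2: "integral\<^sup>L \<nu>2 h = (\<integral>\<omega>. q (X \<omega>) * h (X \<omega>) \<partial>M)"
    unfolding \<nu>2_def by (subst integral_distr) (simp_all add: integral_density qX)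
  show "(\<integral>\<omega>. indicator {\<omega>. A \<omega> = a} \<omega> * h (X \<omega>) \<partial>M) = (\<integral>\<omega>. q (X \<omega>) * h (X \<omega>) \<partial>M)"
    using i1 i2 eq by simp
qed

lemma bm_vec_nth[measurable (raw)]:
  fixes F :: "'b \<Rightarrow> 'a::real_normed_vector ^ 'n"
  assumes "F \<in> borel_measurable N"
  shows "(\<lambda>x. F x $ i) \<in> borel_measurable N"
  by (rule borel_measurable_continuous_on[OF _ assms]) (intro continuous_intros continuous_on_id)

lemma bm_vec_lambda:
  fixes F :: "'b \<Rightarrow> 'a::euclidean_space ^ 'n"
  assumes "\<And>i. (\<lambda>x. F x $ i) \<in> borel_measurable N"
  shows "F \<in> borel_measurable N"
  unfolding borel_measurable_euclidean_space[where f=F]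
proof
  fix b :: "'a ^ 'n" assume "b \<in> Basis"
  then obtain i u where b: "b = axis i u" and "u \<in> Basis" unfolding Basis_vec_def by blast
  have "(\<lambda>x. F x $ i \<bullet> u) \<in> borel_measurable N"
    using assms[of i] by measurable
  then show "(\<lambda>x. F x \<bullet> b) \<in> borel_measurable N" by (simp add: b inner_axis)
qed

lemma bm_det[measurable (raw)]:
  fixes F :: "'b \<Rightarrow> real ^ 'n ^ 'n"
  assumes [measurable]: "F \<in> borel_measurable N"
  shows "(\<lambda>x. det (F x)) \<in> borel_measurable N"
  unfolding det_def by measurable

lemma bm_matmul[measurable (raw)]:
  fixes F :: "'b \<Rightarrow> real ^ 'n ^ 'm" and G :: "'b \<Rightarrow> real ^ 'k ^ 'n"
  assumes [measurable]: "F \<in> borel_measurable N" "G \<in> borel_measurable N"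
  shows "(\<lambda>x. F x ** G x) \<in> borel_measurable N"
  by (intro bm_vec_lambda) (simp add: matrix_matrix_mult_def)

lemma bm_matvec[measurable (raw)]:
  fixes F :: "'b \<Rightarrow> real ^ 'n ^ 'm" and G :: "'b \<Rightarrow> real ^ 'n"
  assumes [measurable]: "F \<in> borel_measurable N" "G \<in> borel_measurable N"
  shows "(\<lambda>x. F x *v G x) \<in> borel_measurable N"
  by (intro bm_vec_lambda) (simp add: matrix_vector_mult_def)

lemma bm_transpose[measurable (raw)]:
  fixes F :: "'b \<Rightarrow> real ^ 'n ^ 'm"
  assumes [measurable]: "F \<in> borel_measurable N"
  shows "(\<lambda>x. transpose (F x)) \<in> borel_measurable N"
  by (intro bm_vec_lambda) (simp add: transpose_def)

definition minv' :: "real^'n^'n \<Rightarrow> real^'n^'n" where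
  "minv' A = (\<chi> r c. det (\<chi> i j. if j = r then axis c 1 $ i else A$i$j) / det A)"

lemma bm_minv'[measurable (raw)]:
  fixes F :: "'b \<Rightarrow> real ^ 'n ^ 'n"
  assumes [measurable]: "F \<in> borel_measurable N"
  shows "(\<lambda>x. minv' (F x)) \<in> borel_measurable N"
proof -
  have [measurable]: "(\<lambda>x. (\<chi> i j. if j = r then axis c 1 $ i else F x $ i $ j) :: real^'n^'n) \<in> borel_measurable N" for r c
    by (intro bm_vec_lambda) simp
  show ?thesis unfolding minv'_def by (intro bm_vec_lambda) simp
qed

lemma matrix_inv_props:
  fixes A :: "real^'n^'n"
  assumes "invertible A"
  shows "A ** matrix_inv A = mat 1" "matrix_inv A ** A = mat 1"
proof -
  from assms obtain B where "A ** B = mat 1 \<and> B ** A = mat 1" unfolding invertible_def by blast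
  then have "A ** matrix_inv A = mat 1 \<and> matrix_inv A ** A = mat 1"
    unfolding matrix_inv_def by (rule someI)
  then show "A ** matrix_inv A = mat 1" "matrix_inv A ** A = mat 1" by auto
qed

lemma minv'_eq:
  fixes A :: "real^'n^'n"
  assumes inv: "invertible A"
  shows "matrix_inv A = minv' A"
proof -
  have d: "det A \<noteq> 0" using inv invertible_det_nz by blast
  have col: "matrix_inv A *v axis c 1 = (\<chi> k. det(\<chi> i j. if j=k then axis c 1 $i else A$i$j) / det A)" for c
  proof -
    have "A *v (matrix_inv A *v axis c 1) = axis c 1"
      by (simp add: matrix_vector_mul_assoc matrix_inv_props(1)[OF inv])
    then show ?thesis using cramer[OF d] by blast
  qed
  have comp: "(B *v axis c 1) $ r = B $ r $ c" for B :: "real^'n^'n" and r c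
    by (simp add: matrix_vector_mult_def axis_def if_distrib cong: if_cong)
  show ?thesis
    unfolding vec_eq_iff minv'_def
  proof (intro allI)
    fix r c
    have "matrix_inv A $ r $ c = (matrix_inv A *v axis c 1) $ r" by (simp add: comp)
    also have "\<dots> = det (\<chi> i j. if j = r then axis c 1 $ i else A$i$j) / det A" by (simp add: col)
    finally show "matrix_inv A $ r $ c = (\<chi> r c. det (\<chi> i j. if j = r then axis c 1 $ i else A$i$j) / det A) $ r $ c"
      by simp
  qed
qed

lemma Mm_inv:
  fixes Wm :: "real^'d^'d" and D :: "real^'k^'d"
  assumes W: "sym_posdef Wm" and rk: "rank D = CARD('k)"
  shows "invertible (transpose D ** Wm ** D)"
proof -
  let ?M = "transpose D ** Wm ** D"
  have injD: "inj ((*v) D)" using rk full_rank_injective by blast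
  have z0: "z = 0" if "?M *v z = 0" for z
  proof -
    have "(D *v z) \<bullet> (Wm *v (D *v z)) = z \<bullet> (transpose D *v (Wm *v (D *v z)))"
      by (metis dot_lmul_matrix inner_commute transpose_matrix_vector)
    also have "\<dots> = z \<bullet> (?M *v z)" by (simp add: matrix_vector_mul_assoc matrix_mul_assoc)
    also have "\<dots> = 0" using that by simp
    finally have "(D *v z) \<bullet> (Wm *v (D *v z)) = 0" .
    then have "D *v z = 0" using W unfolding sym_posdef_def by force
    then have "D *v z = D *v 0" by simp
    then show "z = 0" using injD by (meson injD injD[unfolded inj_def])
  qed
  have "inj ((*v) ?M)"
  proof (rule injI)
    fix x y assume "?M *v x = ?M *v y"
    then have "?M *v (x - y) = 0" by (simp add: matrix_vector_mult_diff_distrib)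
    then have "x - y = 0" by (rule z0)
    then show "x = y" by simp
  qed
  then show ?thesis
    using invertible_left_inverse matrix_left_invertible_injective by blast
qed

lemma Kmat_identity:
  fixes Wm :: "real^'d^'d" and D :: "real^'k^'d" and Db :: "real^'k^'m" and \<beta> :: "real^'k"
  assumes W: "sym_posdef Wm" and rk: "rank D = CARD('k)"
  shows "(D *v \<beta>) v* Kmat Wm D Db = Db *v \<beta>"
proof -
  let ?M = "transpose D ** Wm ** D"
  let ?Mi = "matrix_inv ?M"
  have inv: "invertible ?M" by (rule Mm_inv[OF W rk])
  have tW: "transpose Wm = Wm" using W unfolding sym_posdef_def by simp
  have tM: "transpose ?M = ?M" by (simp add: matrix_transpose_mul tW matrix_mul_assoc)
  have "(D *v \<beta>) v* Kmat Wm D Db = ((((D *v \<beta>) v* Wm) v* D) v* ?Mi) v* transpose Db"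
    unfolding Kmat_def by (simp only: vector_matrix_mul_assoc matrix_mul_assoc)
  also have "((D *v \<beta>) v* Wm) v* D = ?M *v \<beta>"
    by (simp flip: transpose_matrix_vector add: tW matrix_vector_mul_assoc matrix_mul_assoc)
  also have "?M *v \<beta> = \<beta> v* ?M"
    by (metis tM transpose_matrix_vector)
  also have "(\<beta> v* ?M) v* ?Mi = \<beta>"
    by (simp add: vector_matrix_mul_assoc matrix_inv_props(1)[OF inv])
  finally show ?thesis by simp
qed



lemma prob_emeasure_eq: "prob_space N \<Longrightarrow> emeasure N C = ennreal (measure N C)"
proof -
  assume "prob_space N"
  then interpret prob_space N .
  show ?thesis by (rule emeasure_eq_measure)
qed

theorem proposition2:
  fixes M :: "'w measure"
    and Xset :: "(real^'p) set"
    and act :: "'d::finite \<Rightarrow> real" and abar :: "'m::finite \<Rightarrow> real"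
    and f :: "real \<Rightarrow> real^'k::finite" and k0 :: 'k
    and n :: nat
    and X :: "nat \<Rightarrow> 'w \<Rightarrow> real^'p" and A :: "nat \<Rightarrow> 'w \<Rightarrow> real" and R :: "nat \<Rightarrow> 'w \<Rightarrow> real"
    and X0 :: "'w \<Rightarrow> real^'p"
    and pt :: "nat \<Rightarrow> real^'p \<Rightarrow> real \<Rightarrow> real"
    and \<kappa> :: "real^'p \<Rightarrow> real \<Rightarrow> real measure"
    and W :: "nat \<Rightarrow> real^'p \<Rightarrow> real^'d^'d"
    and pibar :: "real^'p \<Rightarrow> real"
  assumes M: "prob_space M"
    and n: "n > 0"
    and act_inj: "inj act" and abar_inj: "inj abar"
    \<comment> \<open>f(a) = (1, f_1(a), ..., f_q(a)): the coordinate k0 is the constant 1\<close>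
    and f_const: "\<forall>a. f a $ k0 = 1"
    and D_rank: "rank (design f act) = CARD('k)"
    \<comment> \<open>random variables\<close>
    and X_meas: "\<forall>i\<in>{1..n}. X i \<in> borel_measurable M"
    and A_meas: "\<forall>i\<in>{1..n}. A i \<in> borel_measurable M"
    and R_meas: "\<forall>i\<in>{1..n}. R i \<in> borel_measurable M"
    and X0_meas: "X0 \<in> borel_measurable M"
    and X_in: "\<forall>i\<in>{1..n}. \<forall>\<omega>\<in>space M. X i \<omega> \<in> Xset"
    and X0_in: "\<forall>\<omega>\<in>space M. X0 \<omega> \<in> Xset"
    and A_in: "\<forall>i\<in>{1..n}. \<forall>\<omega>\<in>space M. A i \<omega> \<in> range act"
    \<comment> \<open>(i) independence of the tuples\<close>
    and indep: "prob_space.indep_vars M (\<lambda>_. borel) (\<lambda>i \<omega>. (X i \<omega>, A i \<omega>, R i \<omega>)) {1..n}"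
    \<comment> \<open>(ii) X_1, ..., X_n identically distributed as the generic X0\<close>
    and X_ident: "\<forall>i\<in>{1..n}. distr M borel (X i) = distr M borel X0"
    \<comment> \<open>(iii) logging policies: conditional distribution of A_i given X_i\<close>
    and pt_meas: "\<forall>i\<in>{1..n}. \<forall>a. (\<lambda>x. pt i x a) \<in> borel_measurable borel"
    and pt_pos: "\<forall>i\<in>{1..n}. \<forall>x\<in>Xset. \<forall>a\<in>range act. pt i x a > 0"
    and pt_sum: "\<forall>i\<in>{1..n}. \<forall>x\<in>Xset. (\<Sum>k\<in>UNIV. pt i x (act k)) = 1"
    and A_cond: "\<forall>i\<in>{1..n}. \<forall>B\<in>sets borel. \<forall>a\<in>range act.
        measure M {\<omega>\<in>space M. X i \<omega> \<in> B \<and> A i \<omega> = a}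
          = (\<integral>\<omega>. indicator B (X i \<omega>) * pt i (X i \<omega>) a \<partial>M)"
    \<comment> \<open>(iv) conditional reward distribution kappa x a, the same for all i\<close>
    and kappa_prob: "\<forall>x\<in>Xset. \<forall>a\<in>range act \<union> range abar. prob_space (\<kappa> x a) \<and> sets (\<kappa> x a) = sets borel"
    and kappa_int: "\<forall>x\<in>Xset. \<forall>a\<in>range act \<union> range abar. integrable (\<kappa> x a) (\<lambda>r. r)"
    and kappa_meas: "\<forall>C\<in>sets borel. (\<lambda>(x, a). measure (\<kappa> x a) C) \<in> borel_measurable borel"
    and R_cond: "\<forall>i\<in>{1..n}. \<forall>B\<in>sets (borel :: ((real^'p) \<times> real) measure). \<forall>C\<in>sets borel.
        measure M {\<omega>\<in>space M. (X i \<omega>, A i \<omega>) \<in> B \<and> R i \<omega> \<in> C}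
          = (\<integral>\<omega>. indicator B (X i \<omega>, A i \<omega>) * measure (\<kappa> (X i \<omega>) (A i \<omega>)) C \<partial>M)"
    \<comment> \<open>regression assumption\<close>
    and regression: "\<forall>x\<in>Xset. \<exists>\<beta>. \<forall>a\<in>range act \<union> range abar. rho \<kappa> x a = f a \<bullet> \<beta>"
    \<comment> \<open>weight matrices\<close>
    and W_spd: "\<forall>i\<in>{1..n}. \<forall>x\<in>Xset. sym_posdef (W i x)"
    and W_meas: "\<forall>i\<in>{1..n}. W i \<in> borel_measurable borel"
    \<comment> \<open>deterministic target policy with values in the new action set\<close>
    and pibar_in: "\<forall>x\<in>Xset. pibar x \<in> range abar"
    and pibar_meas: "pibar \<in> borel_measurable borel"
    \<comment> \<open>all expectations appearing are finite\<close>
    and R_int: "\<forall>i\<in>{1..n}. integrable M (R i)"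
    and term_int: "\<forall>i\<in>{1..n}. integrable M (\<lambda>\<omega>. R i \<omega> *
        (onehot act (A i \<omega>) \<bullet> (Kmat (W i (X i \<omega>)) (design f act) (design f abar) *v onehot abar (pibar (X i \<omega>))))
        / pt i (X i \<omega>) (A i \<omega>))"
    and V_int: "integrable M (\<lambda>\<omega>. rho \<kappa> (X0 \<omega>) (pibar (X0 \<omega>)))"
  shows "(\<integral>\<omega>. (1 / real n) * (\<Sum>i=1..n. R i \<omega> *
        (onehot act (A i \<omega>) \<bullet> (Kmat (W i (X i \<omega>)) (design f act) (design f abar) *v onehot abar (pibar (X i \<omega>))))
        / pt i (X i \<omega>) (A i \<omega>)) \<partial>M)
     = (\<integral>\<omega>. rho \<kappa> (X0 \<omega>) (pibar (X0 \<omega>)) \<partial>M)"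
proof -
  interpret P: prob_space M by (rule M)
  define V where "V = (\<integral>\<omega>. rho \<kappa> (X0 \<omega>) (pibar (X0 \<omega>)) \<partial>M)"
  define T where "T = (\<lambda>i \<omega>. R i \<omega> *
        (onehot act (A i \<omega>) \<bullet> (Kmat (W i (X i \<omega>)) (design f act) (design f abar) *v onehot abar (pibar (X i \<omega>))))
        / pt i (X i \<omega>) (A i \<omega>))"
  have per_i: "integral\<^sup>L M (T i) = V" if i: "i \<in> {1..n}" for i
  proof -
    have Xm[measurable]: "X i \<in> borel_measurable M" using X_meas i by blast
    have Am[measurable]: "A i \<in> borel_measurable M" using A_meas i by blast
    have Rm[measurable]: "R i \<in> borel_measurable M" using R_meas i by blast
    have Wm[measurable]: "W i \<in> borel_measurable borel" using W_meas i by blast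
    have ptm[measurable]: "(\<lambda>x. pt i x a) \<in> borel_measurable borel" for a using pt_meas i by blast
    have pibm[measurable]: "pibar \<in> borel_measurable borel" by (rule pibar_meas)
    have Xin: "\<omega> \<in> space M \<Longrightarrow> X i \<omega> \<in> Xset" for \<omega> using X_in i by blast
    have Ain: "\<omega> \<in> space M \<Longrightarrow> A i \<omega> \<in> range act" for \<omega> using A_in i by blast
    define D where "D = design f act"
    define Db where "Db = design f abar"
    define Kf where "Kf = (\<lambda>Wm. Wm ** D ** minv' (transpose D ** Wm ** D) ** transpose Db)"
    have Kf_eq: "Kmat (W i x) D Db = Kf (W i x)" if "x \<in> Xset" for x
    proof -
      have "sym_posdef (W i x)" using W_spd i that by blast
      moreover have "rank D = CARD('k)" using D_rank unfolding D_def .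
      ultimately have "invertible (transpose D ** W i x ** D)" by (rule Mm_inv)
      then show ?thesis unfolding Kmat_def Kf_def by (simp add: minv'_eq)
    qed
    have Kfm[measurable]: "(\<lambda>x. Kf (W i x)) \<in> borel_measurable borel"
      unfolding Kf_def by measurable
    have ohm[measurable]: "(\<lambda>x. onehot abar (pibar x)) \<in> borel_measurable borel"
      unfolding onehot_def by (intro bm_vec_lambda) simp
    define ck where "ck = (\<lambda>k x. onehot act (act k) \<bullet> (Kf (W i x) *v onehot abar (pibar x)) / pt i x (act k))"
    have ckm[measurable]: "ck k \<in> borel_measurable borel" for k
      unfolding ck_def by measurable
    define g where "g = (\<lambda>z::(real^'p) \<times> real. \<Sum>k\<in>UNIV. if snd z = act k then ck k (fst z) else 0)"
    have gm[measurable]: "g \<in> borel_measurable borel"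
    proof -
      have "g \<in> borel_measurable (borel \<Otimes>\<^sub>M borel)" unfolding g_def by measurable
      then show ?thesis by (simp add: borel_prod)
    qed
    have gk: "g (x, act k) = ck k x" for x k
      unfolding g_def using act_inj by (simp add: inj_eq)
    have Tg: "T i \<omega> = R i \<omega> * g (X i \<omega>, A i \<omega>)" if w: "\<omega> \<in> space M" for \<omega>
    proof -
      obtain k0 where k0: "A i \<omega> = act k0" using Ain[OF w] by blast
      show ?thesis
        unfolding T_def k0 gk ck_def using Kf_eq[OF Xin[OF w]]
        by (simp add: D_def Db_def)
    qed
    define Kw where "Kw = (\<lambda>\<omega>. \<kappa> (X i \<omega>) (A i \<omega>))"
    have Ym[measurable]: "(\<lambda>\<omega>. (X i \<omega>, A i \<omega>)) \<in> M \<rightarrow>\<^sub>M (borel :: ((real^'p) \<times> real) measure)"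
      using measurable_Pair[OF Xm Am] by (simp add: borel_prod)
    have Kprob: "prob_space (Kw \<omega>)" "sets (Kw \<omega>) = sets borel" if "\<omega> \<in> space M" for \<omega>
      using kappa_prob Xin[OF that] Ain[OF that] unfolding Kw_def by blast+
    have mKw[measurable]: "(\<lambda>\<omega>. measure (Kw \<omega>) C) \<in> borel_measurable M" if C: "C \<in> sets borel" for C
      using measurable_compose[OF Ym kappa_meas[rule_format, OF C]] unfolding Kw_def by simp
    have Kwm[measurable]: "Kw \<in> M \<rightarrow>\<^sub>M subprob_algebra borel"
    proof (rule measurable_subprob_algebra)
      fix \<omega> assume w: "\<omega> \<in> space M"
      show "subprob_space (Kw \<omega>)" using Kprob(1)[OF w] by (rule prob_space_imp_subprob_space)
      show "sets (Kw \<omega>) = sets borel" using Kprob(2)[OF w] .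
    next
      fix C :: "real set" assume C: "C \<in> sets borel"
      have "(\<lambda>\<omega>. ennreal (measure (Kw \<omega>) C)) \<in> borel_measurable M" using mKw[OF C] by measurable
      then show "(\<lambda>\<omega>. emeasure (Kw \<omega>) C) \<in> borel_measurable M"
        by (rule measurable_cong[THEN iffD1, rotated]) (simp add: prob_emeasure_eq[OF Kprob(1)])
    qed
    have rect: "\<And>B C. B \<in> sets borel \<Longrightarrow> C \<in> sets borel \<Longrightarrow>
       emeasure M {\<omega>\<in>space M. (X i \<omega>, A i \<omega>) \<in> B \<and> R i \<omega> \<in> C}
         = (\<integral>\<^sup>+\<omega>. indicator B (X i \<omega>, A i \<omega>) * emeasure (Kw \<omega>) C \<partial>M)"
    proof -
      fix B :: "((real^'p) \<times> real) set" and C :: "real set"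
      assume B[measurable]: "B \<in> sets borel" and C[measurable]: "C \<in> sets borel"
      have fm: "(\<lambda>\<omega>. indicator B (X i \<omega>, A i \<omega>) * measure (Kw \<omega>) C) \<in> borel_measurable M"
        using mKw[OF C] by measurable
      have fint: "integrable M (\<lambda>\<omega>. indicator B (X i \<omega>, A i \<omega>) * measure (Kw \<omega>) C)"
        by (rule P.integrable_const_bound[where B=1, OF _ fm])
           (auto simp: indicator_def prob_space.prob_le_1[OF Kprob(1)])
      have "emeasure M {\<omega>\<in>space M. (X i \<omega>, A i \<omega>) \<in> B \<and> R i \<omega> \<in> C}
          = ennreal (measure M {\<omega>\<in>space M. (X i \<omega>, A i \<omega>) \<in> B \<and> R i \<omega> \<in> C})"
        by (rule P.emeasure_eq_measure)
      also have "measure M {\<omega>\<in>space M. (X i \<omega>, A i \<omega>) \<in> B \<and> R i \<omega> \<in> C}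
          = (\<integral>\<omega>. indicator B (X i \<omega>, A i \<omega>) * measure (Kw \<omega>) C \<partial>M)"
        using R_cond i B C unfolding Kw_def by blast
      also have "ennreal \<dots> = (\<integral>\<^sup>+\<omega>. ennreal (indicator B (X i \<omega>, A i \<omega>) * measure (Kw \<omega>) C) \<partial>M)"
        by (rule nn_integral_eq_integral[symmetric, OF fint]) auto
      also have "\<dots> = (\<integral>\<^sup>+\<omega>. indicator B (X i \<omega>, A i \<omega>) * emeasure (Kw \<omega>) C \<partial>M)"
        by (rule nn_integral_cong) (simp add: indicator_def prob_emeasure_eq[OF Kprob(1)])
      finally show "emeasure M {\<omega>\<in>space M. (X i \<omega>, A i \<omega>) \<in> B \<and> R i \<omega> \<in> C}
         = (\<integral>\<^sup>+\<omega>. indicator B (X i \<omega>, A i \<omega>) * emeasure (Kw \<omega>) C \<partial>M)" .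
    qed
    have Kwint: "\<And>\<omega>. \<omega> \<in> space M \<Longrightarrow> integrable (Kw \<omega>) (\<lambda>r. r)"
      using kappa_int Xin Ain unfolding Kw_def by blast
    have intRg: "integrable M (\<lambda>\<omega>. R i \<omega> * g (X i \<omega>, A i \<omega>))"
    proof -
      have "integrable M (T i)" using term_int i unfolding T_def by blast
      then show ?thesis by (rule Bochner_Integration.integrable_cong[THEN iffD1, OF refl, rotated]) (simp add: Tg)
    qed
    note S1 = disint_int[OF M Ym Rm Kwm rect Kwint gm intRg]
    define S0 where "S0 = restrict_space (borel :: (real^'p) measure) Xset"
    have spS0: "space S0 = Xset" unfolding S0_def by (simp add: space_restrict_space)
    have X0S0[measurable]: "X0 \<in> M \<rightarrow>\<^sub>M S0"
      unfolding S0_def by (rule measurable_restrict_space2) (use X0_in X0_meas in auto)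
    have XS0[measurable]: "X i \<in> M \<rightarrow>\<^sub>M S0"
      unfolding S0_def by (rule measurable_restrict_space2) (use Xin in auto)
    have setsS0: "\<exists>B'. B' \<in> sets borel \<and> B = Xset \<inter> B'" if "B \<in> sets S0" for B
      using that unfolding S0_def sets_restrict_space by blast
    have kerS0: "(\<lambda>x. \<kappa> x (\<alpha> x)) \<in> S0 \<rightarrow>\<^sub>M subprob_algebra borel"
      if am: "\<alpha> \<in> borel_measurable borel" and ain: "\<And>x. x \<in> Xset \<Longrightarrow> \<alpha> x \<in> range act \<union> range abar" for \<alpha>
    proof (rule measurable_subprob_algebra)
      fix x assume "x \<in> space S0"
      then have x: "x \<in> Xset" by (simp add: spS0)
      have "prob_space (\<kappa> x (\<alpha> x)) \<and> sets (\<kappa> x (\<alpha> x)) = sets borel"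
        using kappa_prob x ain[OF x] by blast
      then show "subprob_space (\<kappa> x (\<alpha> x))" "sets (\<kappa> x (\<alpha> x)) = sets borel"
        by (auto intro: prob_space_imp_subprob_space)
    next
      fix C :: "real set" assume C: "C \<in> sets borel"
      have pm: "(\<lambda>x. (x, \<alpha> x)) \<in> (borel :: (real^'p) measure) \<rightarrow>\<^sub>M (borel :: ((real^'p) \<times> real) measure)"
        using measurable_Pair[OF measurable_ident_sets[OF refl] am] by (simp add: borel_prod)
      have mm: "(\<lambda>x. measure (\<kappa> x (\<alpha> x)) C) \<in> borel_measurable borel"
        using measurable_compose[OF pm kappa_meas[rule_format, OF C]] by simp
      have "(\<lambda>x. ennreal (measure (\<kappa> x (\<alpha> x)) C)) \<in> borel_measurable S0"
        unfolding S0_def by (intro measurable_restrict_space1 measurable_compose[OF mm measurable_ennreal])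
      then have "(\<lambda>x. ennreal (measure (\<kappa> x (\<alpha> x)) C)) \<in> borel_measurable S0" .
      then show "(\<lambda>x. emeasure (\<kappa> x (\<alpha> x)) C) \<in> borel_measurable S0"
      proof (rule measurable_cong[THEN iffD1, rotated])
        fix x assume "x \<in> space S0"
        then have x: "x \<in> Xset" by (simp add: spS0)
        have "prob_space (\<kappa> x (\<alpha> x))" using kappa_prob x ain[OF x] by blast
        then show "ennreal (measure (\<kappa> x (\<alpha> x)) C) = emeasure (\<kappa> x (\<alpha> x)) C"
          by (simp add: prob_emeasure_eq)
      qed
    qed
    have rhoS0: "(\<lambda>x. rho \<kappa> x (\<alpha> x)) \<in> borel_measurable S0"
      if "\<alpha> \<in> borel_measurable borel" "\<And>x. x \<in> Xset \<Longrightarrow> \<alpha> x \<in> range act \<union> range abar" for \<alpha>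
      unfolding rho_def
      by (rule measurable_compose[OF kerS0[OF that] integral_measurable_subprob_algebra]) (auto intro: measurable_ident_sets)
    define hk where "hk = (\<lambda>k x. rho \<kappa> x (act k) * ck k x)"
    have decomp: "(\<integral>r. r \<partial>Kw \<omega>) * g (X i \<omega>, A i \<omega>) = (\<Sum>k\<in>UNIV. indicator {\<omega>. A i \<omega> = act k} \<omega> * hk k (X i \<omega>))"
      if w: "\<omega> \<in> space M" for \<omega>
    proof -
      obtain k0 where k0: "A i \<omega> = act k0" using Ain[OF w] by blast
      have "(\<integral>r. r \<partial>Kw \<omega>) * g (X i \<omega>, A i \<omega>) = hk k0 (X i \<omega>)"
        unfolding k0 gk hk_def Kw_def rho_def ..
      also have "\<dots> = (\<Sum>k\<in>UNIV. indicator {\<omega>. A i \<omega> = act k} \<omega> * hk k (X i \<omega>))"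
        using act_inj by (simp add: k0 indicator_def inj_eq)
      finally show ?thesis .
    qed
    have intk: "integrable M (\<lambda>\<omega>. indicator {\<omega>. A i \<omega> = act k} \<omega> * hk k (X i \<omega>))" for k
    proof -
      have sk: "{\<omega>\<in>space M. A i \<omega> = act k} \<in> sets M" by measurable
      have "integrable M (\<lambda>\<omega>. indicator {\<omega>\<in>space M. A i \<omega> = act k} \<omega> *\<^sub>R ((\<integral>r. r \<partial>Kw \<omega>) * g (X i \<omega>, A i \<omega>)))"
        by (rule integrable_mult_indicator[OF sk S1(1)])
      then show ?thesis
      proof (rule Bochner_Integration.integrable_cong[THEN iffD1, OF refl, rotated])
        fix \<omega> assume w: "\<omega> \<in> space M"
        show "indicator {\<omega>\<in>space M. A i \<omega> = act k} \<omega> *\<^sub>R ((\<integral>r. r \<partial>Kw \<omega>) * g (X i \<omega>, A i \<omega>))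
          = indicator {\<omega>. A i \<omega> = act k} \<omega> * hk k (X i \<omega>)"
          using w act_inj by (auto simp: indicator_def gk hk_def Kw_def rho_def)
      qed
    qed
    have ca: "integrable M (\<lambda>\<omega>. pt i (X i \<omega>) (act k) * hk k (X i \<omega>)) \<and>
       (\<integral>\<omega>. indicator {\<omega>. A i \<omega> = act k} \<omega> * hk k (X i \<omega>) \<partial>M) = (\<integral>\<omega>. pt i (X i \<omega>) (act k) * hk k (X i \<omega>) \<partial>M)" for k
    proof -
      have ptS0[measurable]: "(\<lambda>x. pt i x (act k)) \<in> borel_measurable S0"
        unfolding S0_def by (rule measurable_restrict_space1) (rule ptm)
      have qnn: "\<And>x. x \<in> space S0 \<Longrightarrow> pt i x (act k) \<ge> 0"
        using pt_pos i by (force simp: spS0 less_imp_le)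
      have ple: "pt i x (act k) \<le> 1" if x: "x \<in> Xset" for x
      proof -
        have "pt i x (act k) \<le> (\<Sum>k'\<in>UNIV. pt i x (act k'))"
          by (rule member_le_sum) (use pt_pos i x in \<open>auto simp: less_imp_le\<close>)
        then show ?thesis using pt_sum i x by simp
      qed
      have hyp: "emeasure M {\<omega>\<in>space M. X i \<omega> \<in> B \<and> A i \<omega> = act k}
         = (\<integral>\<^sup>+\<omega>. ennreal (pt i (X i \<omega>) (act k)) * indicator B (X i \<omega>) \<partial>M)" if BS: "B \<in> sets S0" for B
      proof -
        obtain B' where B'[measurable]: "B' \<in> sets borel" and BB: "B = Xset \<inter> B'" using setsS0[OF BS] by blast
        have e1: "{\<omega>\<in>space M. X i \<omega> \<in> B \<and> A i \<omega> = act k} = {\<omega>\<in>space M. X i \<omega> \<in> B' \<and> A i \<omega> = act k}"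
          using Xin BB by auto
        have fm: "(\<lambda>\<omega>. indicator B' (X i \<omega>) * pt i (X i \<omega>) (act k)) \<in> borel_measurable M" by measurable
        have fint: "integrable M (\<lambda>\<omega>. indicator B' (X i \<omega>) * pt i (X i \<omega>) (act k))"
        proof (rule P.integrable_const_bound[where B=1, OF AE_I2 fm])
          fix \<omega> assume w: "\<omega> \<in> space M"
          have "0 < pt i (X i \<omega>) (act k)" using pt_pos i Xin[OF w] by blast
          then show "norm (indicator B' (X i \<omega>) * pt i (X i \<omega>) (act k)) \<le> 1"
            using ple[OF Xin[OF w]] by (auto simp: indicator_def)
        qed
        have "emeasure M {\<omega>\<in>space M. X i \<omega> \<in> B \<and> A i \<omega> = act k}
            = ennreal (measure M {\<omega>\<in>space M. X i \<omega> \<in> B' \<and> A i \<omega> = act k})"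
          unfolding e1 by (rule P.emeasure_eq_measure)
        also have "measure M {\<omega>\<in>space M. X i \<omega> \<in> B' \<and> A i \<omega> = act k}
            = (\<integral>\<omega>. indicator B' (X i \<omega>) * pt i (X i \<omega>) (act k) \<partial>M)"
          using A_cond i B' by blast
        also have "ennreal \<dots> = (\<integral>\<^sup>+\<omega>. ennreal (indicator B' (X i \<omega>) * pt i (X i \<omega>) (act k)) \<partial>M)"
        proof (rule nn_integral_eq_integral[symmetric, OF fint])
          show "AE \<omega> in M. 0 \<le> indicator B' (X i \<omega>) * pt i (X i \<omega>) (act k)"
          proof (rule AE_I2)
            fix \<omega> assume w: "\<omega> \<in> space M"
            have "0 < pt i (X i \<omega>) (act k)" using pt_pos i Xin[OF w] by blast
            then show "0 \<le> indicator B' (X i \<omega>) * pt i (X i \<omega>) (act k)" by simp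
          qed
        qed
        also have "\<dots> = (\<integral>\<^sup>+\<omega>. ennreal (pt i (X i \<omega>) (act k)) * indicator B (X i \<omega>) \<partial>M)"
          by (rule nn_integral_cong) (use Xin BB in \<open>auto simp: indicator_def\<close>)
        finally show ?thesis .
      qed
      have r1: "(\<lambda>x. rho \<kappa> x ((\<lambda>_. act k) x)) \<in> borel_measurable S0" by (rule rhoS0) auto
      have r2: "ck k \<in> borel_measurable S0" unfolding S0_def by (rule measurable_restrict_space1) (rule ckm)
      have hS0: "hk k \<in> borel_measurable S0"
        unfolding hk_def using borel_measurable_times[OF r1 r2] by simp
      from cond_action[OF M XS0 Am ptS0 qnn hyp hS0 intk[of k]] show ?thesis by blast
    qed
    have fin: "(\<Sum>k\<in>UNIV. pt i (X i \<omega>) (act k) * hk k (X i \<omega>)) = rho \<kappa> (X i \<omega>) (pibar (X i \<omega>))"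
      if w: "\<omega> \<in> space M" for \<omega>
    proof -
      define x where "x = X i \<omega>"
      have x: "x \<in> Xset" using Xin[OF w] x_def by simp
      obtain \<beta> where \<beta>: "\<forall>a\<in>range act \<union> range abar. rho \<kappa> x a = f a \<bullet> \<beta>" using regression x by blast
      obtain j where j: "pibar x = abar j" using pibar_in x by blast
      have ohact: "onehot act (act k) = axis k 1" for k
        using act_inj unfolding onehot_def axis_def by (auto simp: vec_eq_iff inj_eq)
      have ohabar: "onehot abar (abar j) = axis j 1"
        using abar_inj unfolding onehot_def axis_def by (auto simp: vec_eq_iff inj_eq)
      have comp: "(B *v axis c 1) $ r = B $ r $ c" for B :: "real^'m^'d" and r c
        by (simp add: matrix_vector_mult_def axis_def if_distrib cong: if_cong)
      have trm: "pt i x (act k) * hk k x = rho \<kappa> x (act k) * Kmat (W i x) D Db $ k $ j" for k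
      proof -
        have ppos: "pt i x (act k) > 0" using pt_pos i x by blast
        have "ck k x = Kmat (W i x) D Db $ k $ j / pt i x (act k)"
          unfolding ck_def j ohact ohabar using Kf_eq[OF x] by (simp add: inner_axis' comp)
        then show ?thesis unfolding hk_def using ppos by simp
      qed
      have rk: "rho \<kappa> x (act k) = (D *v \<beta>) $ k" for k
        using \<beta> by (simp add: D_def design_def matrix_vector_mul_component)
      have "(\<Sum>k\<in>UNIV. pt i (X i \<omega>) (act k) * hk k (X i \<omega>)) = (\<Sum>k\<in>UNIV. Kmat (W i x) D Db $ k $ j * (D *v \<beta>) $ k)"
        unfolding x_def[symmetric] using trm rk by (simp add: mult.commute)
      also have "\<dots> = ((D *v \<beta>) v* Kmat (W i x) D Db) $ j" by (simp add: vector_matrix_mult_def mult.commute)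
      also have "\<dots> = (Db *v \<beta>) $ j"
      proof -
        have "sym_posdef (W i x)" using W_spd i x by blast
        moreover have "rank D = CARD('k)" using D_rank unfolding D_def .
        ultimately show ?thesis by (simp add: Kmat_identity)
      qed
      also have "\<dots> = rho \<kappa> x (abar j)"
        using \<beta> by (simp add: Db_def design_def matrix_vector_mul_component)
      finally show ?thesis using j x_def by simp
    qed
    have distr_eq: "distr M S0 (X i) = distr M S0 X0"
    proof (rule measure_eqI)
      show "sets (distr M S0 (X i)) = sets (distr M S0 X0)" by simp
      fix B assume "B \<in> sets (distr M S0 (X i))"
      then have B: "B \<in> sets S0" by simp
      then obtain B' where B': "B' \<in> sets borel" and BB: "B = Xset \<inter> B'" using setsS0 by blast
      have "emeasure (distr M S0 (X i)) B = emeasure M (X i -` B \<inter> space M)" by (rule emeasure_distr[OF XS0 B])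
      also have "X i -` B \<inter> space M = X i -` B' \<inter> space M" using Xin BB by auto
      also have "emeasure M \<dots> = emeasure (distr M borel (X i)) B'" by (rule emeasure_distr[symmetric, OF Xm B'])
      also have "\<dots> = emeasure (distr M borel X0) B'" using X_ident i by simp
      also have "\<dots> = emeasure M (X0 -` B' \<inter> space M)" by (rule emeasure_distr[OF X0_meas B'])
      also have "X0 -` B' \<inter> space M = X0 -` B \<inter> space M" using X0_in BB by auto
      also have "emeasure M \<dots> = emeasure (distr M S0 X0) B" by (rule emeasure_distr[symmetric, OF X0S0 B])
      finally show "emeasure (distr M S0 (X i)) B = emeasure (distr M S0 X0) B" .
    qed
    have Gm[measurable]: "(\<lambda>x. rho \<kappa> x (pibar x)) \<in> borel_measurable S0"
      by (rule rhoS0) (use pibar_in in auto)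
    have "integral\<^sup>L M (T i) = (\<integral>\<omega>. R i \<omega> * g (X i \<omega>, A i \<omega>) \<partial>M)"
      by (rule Bochner_Integration.integral_cong) (simp_all add: Tg)
    also have "\<dots> = (\<integral>\<omega>. (\<integral>r. r \<partial>Kw \<omega>) * g (X i \<omega>, A i \<omega>) \<partial>M)"
      by (rule S1(2))
    also have "\<dots> = (\<integral>\<omega>. (\<Sum>k\<in>UNIV. indicator {\<omega>. A i \<omega> = act k} \<omega> * hk k (X i \<omega>)) \<partial>M)"
      by (rule Bochner_Integration.integral_cong) (simp_all add: decomp)
    also have "\<dots> = (\<Sum>k\<in>UNIV. (\<integral>\<omega>. indicator {\<omega>. A i \<omega> = act k} \<omega> * hk k (X i \<omega>) \<partial>M))"
      by (rule Bochner_Integration.integral_sum) (rule intk)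
    also have "\<dots> = (\<Sum>k\<in>UNIV. (\<integral>\<omega>. pt i (X i \<omega>) (act k) * hk k (X i \<omega>) \<partial>M))"
      using ca by simp
    also have "\<dots> = (\<integral>\<omega>. (\<Sum>k\<in>UNIV. pt i (X i \<omega>) (act k) * hk k (X i \<omega>)) \<partial>M)"
      by (rule Bochner_Integration.integral_sum[symmetric]) (use ca in blast)
    also have "\<dots> = (\<integral>\<omega>. rho \<kappa> (X i \<omega>) (pibar (X i \<omega>)) \<partial>M)"
      by (rule Bochner_Integration.integral_cong) (simp_all add: fin)
    also have "\<dots> = integral\<^sup>L (distr M S0 (X i)) (\<lambda>x. rho \<kappa> x (pibar x))"
      by (rule integral_distr[symmetric]) measurable
    also have "\<dots> = integral\<^sup>L (distr M S0 X0) (\<lambda>x. rho \<kappa> x (pibar x))"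
      by (simp add: distr_eq)
    also have "\<dots> = V"
      unfolding V_def by (rule integral_distr) measurable
    finally show ?thesis .
  qed
  have Tint: "integrable M (T i)" if "i \<in> {1..n}" for i
    using term_int that unfolding T_def by blast
  have "(\<integral>\<omega>. (1 / real n) * (\<Sum>i=1..n. T i \<omega>) \<partial>M) = (1 / real n) * (\<integral>\<omega>. (\<Sum>i=1..n. T i \<omega>) \<partial>M)"
    by (rule integral_mult_right_zero)
  also have "(\<integral>\<omega>. (\<Sum>i=1..n. T i \<omega>) \<partial>M) = (\<Sum>i=1..n. integral\<^sup>L M (T i))"
    by (rule Bochner_Integration.integral_sum) (use Tint in auto)
  also have "\<dots> = (\<Sum>i=1..n. V)" using per_i by simp
  also have "(1 / real n) * \<dots> = V" using n by simp
  finally show ?thesis unfolding T_def V_def .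
qed

end
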